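(* Let $A$ be a complex affine Poisson algebra of Krull dimension $d$ on which the Poisson bracket is not identically zero. Then the intersection of all Poisson prime ideals of $A$ of height $\ge d-1$ is nonzero.
   Context: A Poisson algebra over $\mathbb C$ is a commutative $\mathbb C$-algebra with a $\mathbb C$-bilinear Lie bracket $\{-,-\}$ such that $\{-,x\}$ is a derivation for each $x$. Complex affine means finitely generated over $\mathbb C$ and an integral domain. A Poisson prime ideal is a prime ideal $P$ with $\{P,A\}\subseteq P$. *)

theory Defs
  imports Main "HOL-Library.Extended_Nat"
begin

text \<open>A complex algebra structure on a commutative ring 'a is given by a unital ring
  homomorphism from the complex numbers into 'a (the structure map).\<close>
definition cplx_alg_map :: "(complex \<Rightarrow> 'a::comm_ring_1) \<Rightarrow> bool" where
  "cplx_alg_map \<iota> \<longleftrightarrow> \<iota> 1 = 1 \<and> (\<forall>a b. \<iota> (a + b) = \<iota> a + \<iota> b) \<and> (\<forall>a b. \<iota> (a * b) = \<iota> a * \<iota> b)"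

inductive_set alg_gen :: "(complex \<Rightarrow> 'a::comm_ring_1) \<Rightarrow> 'a set \<Rightarrow> 'a set"
  for \<iota> :: "complex \<Rightarrow> 'a" and S :: "'a set" where
  scalar: "\<iota> c \<in> alg_gen \<iota> S"
| gen: "s \<in> S \<Longrightarrow> s \<in> alg_gen \<iota> S"
| add: "x \<in> alg_gen \<iota> S \<Longrightarrow> y \<in> alg_gen \<iota> S \<Longrightarrow> x + y \<in> alg_gen \<iota> S"
| mult: "x \<in> alg_gen \<iota> S \<Longrightarrow> y \<in> alg_gen \<iota> S \<Longrightarrow> x * y \<in> alg_gen \<iota> S"

text \<open>Complex affine: finitely generated complex algebra which is an integral domain
  (the domain property is imposed by the type class idom).\<close>
definition complex_affine :: "(complex \<Rightarrow> 'a::idom) \<Rightarrow> bool" where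
  "complex_affine \<iota> \<longleftrightarrow> cplx_alg_map \<iota> \<and> (\<exists>S. finite S \<and> alg_gen \<iota> S = UNIV)"

definition poisson_bracket :: "(complex \<Rightarrow> 'a::comm_ring_1) \<Rightarrow> ('a \<Rightarrow> 'a \<Rightarrow> 'a) \<Rightarrow> bool" where
  "poisson_bracket \<iota> br \<longleftrightarrow>
     (\<forall>x y z. br (x + y) z = br x z + br y z) \<and>
     (\<forall>x y z. br x (y + z) = br x y + br x z) \<and>
     (\<forall>c x y. br (\<iota> c * x) y = \<iota> c * br x y) \<and>
     (\<forall>c x y. br x (\<iota> c * y) = \<iota> c * br x y) \<and>
     (\<forall>x. br x x = 0) \<and>
     (\<forall>x y. br x y = - br y x) \<and>
     (\<forall>x y z. br x (br y z) + br y (br z x) + br z (br x y) = 0) \<and>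
     (\<forall>x y z. br (x * y) z = x * br y z + y * br x z)"

definition is_ideal :: "'a::comm_ring_1 set \<Rightarrow> bool" where
  "is_ideal I \<longleftrightarrow> 0 \<in> I \<and> (\<forall>x\<in>I. \<forall>y\<in>I. x + y \<in> I) \<and> (\<forall>r. \<forall>x\<in>I. r * x \<in> I)"

definition prime_ideal :: "'a::comm_ring_1 set \<Rightarrow> bool" where
  "prime_ideal P \<longleftrightarrow> is_ideal P \<and> P \<noteq> UNIV \<and> (\<forall>a b. a * b \<in> P \<longrightarrow> a \<in> P \<or> b \<in> P)"

definition poisson_prime :: "('a::comm_ring_1 \<Rightarrow> 'a \<Rightarrow> 'a) \<Rightarrow> 'a set \<Rightarrow> bool" where
  "poisson_prime br P \<longleftrightarrow> prime_ideal P \<and> (\<forall>a\<in>P. \<forall>b. br a b \<in> P)"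

definition prime_chain :: "(nat \<Rightarrow> 'a::comm_ring_1 set) \<Rightarrow> nat \<Rightarrow> bool" where
  "prime_chain f n \<longleftrightarrow> (\<forall>i\<le>n. prime_ideal (f i)) \<and> (\<forall>i<n. f i \<subset> f (Suc i))"

definition height :: "'a::comm_ring_1 set \<Rightarrow> enat" where
  "height P = Sup {enat n | n. \<exists>f. prime_chain f n \<and> f n = P}"

definition krull_dim :: "'a::comm_ring_1 itself \<Rightarrow> enat" where
  "krull_dim _ = Sup {enat n | n. \<exists>f::nat \<Rightarrow> 'a set. prime_chain f n}"

end

theory Submission
  imports Defs "HOL-Computational_Algebra.Polynomial" "HOL-Computational_Algebra.Fundamental_Theorem_Algebra"
   "HOL-Analysis.Continuum_Not_Denumerable" "HOL-Library.Countable_Set"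
begin


lemma cam:
  assumes "cplx_alg_map \<iota>"
  shows cam_1: "\<iota> 1 = 1" and cam_add: "\<iota> (a+b) = \<iota> a + \<iota> b" and cam_mult: "\<iota> (a*b) = \<iota> a * \<iota> b"
    and cam_0: "\<iota> 0 = 0"
proof -
  show 1: "\<iota> 1 = 1" "\<iota> (a+b) = \<iota> a + \<iota> b" "\<iota> (a*b) = \<iota> a * \<iota> b" using assms by (auto simp: cplx_alg_map_def)
  have "\<iota> (0+0) = \<iota> 0 + \<iota> 0" using assms unfolding cplx_alg_map_def by blast
  then show "\<iota> 0 = 0" by simp
qed

lemma cam_uminus: assumes "cplx_alg_map \<iota>" shows "\<iota> (- a) = - \<iota> a"
proof -
  have "\<iota> (a + - a) = \<iota> a + \<iota> (-a)" by (rule cam_add[OF assms])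
  then have "\<iota> a + \<iota> (-a) = 0" using cam_0[OF assms] by simp
  then show ?thesis by (simp add: add_eq_0_iff2)
qed

lemma cam_diff: assumes "cplx_alg_map \<iota>" shows "\<iota> (a - b) = \<iota> a - \<iota> b"
  using cam_add[OF assms, of a "-b"] cam_uminus[OF assms, of b] by simp

lemma cam_of_nat: assumes "cplx_alg_map \<iota>" shows "\<iota> (of_nat n) = of_nat n"
  by (induction n) (simp_all add: cam_0[OF assms] cam_add[OF assms] cam_1[OF assms])

lemma cam_inv: assumes "cplx_alg_map \<iota>" "c \<noteq> 0" shows "\<iota> c * \<iota> (inverse c) = 1"
  using cam_mult[OF assms(1), of c "inverse c"] cam_1[OF assms(1)] assms(2) by simp

lemma ideal_neg: "is_ideal I \<Longrightarrow> x \<in> I \<Longrightarrow> - x \<in> I"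
  unfolding is_ideal_def by (metis mult_minus1)
lemma ideal_add: "is_ideal I \<Longrightarrow> x \<in> I \<Longrightarrow> y \<in> I \<Longrightarrow> x + y \<in> I"
  unfolding is_ideal_def by blast
lemma ideal_diff: "is_ideal I \<Longrightarrow> x \<in> I \<Longrightarrow> y \<in> I \<Longrightarrow> x - y \<in> I"
  using ideal_add ideal_neg by (metis diff_conv_add_uminus)
lemma ideal_multL: "is_ideal I \<Longrightarrow> x \<in> I \<Longrightarrow> r * x \<in> I"
  unfolding is_ideal_def by blast
lemma ideal_multR: "is_ideal I \<Longrightarrow> x \<in> I \<Longrightarrow> x * r \<in> I"
  unfolding is_ideal_def by (metis mult.commute)
lemma ideal_0: "is_ideal I \<Longrightarrow> 0 \<in> I"
  unfolding is_ideal_def by blast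
lemma ideal_sum: "is_ideal I \<Longrightarrow> (\<And>i. i \<in> A \<Longrightarrow> f i \<in> I) \<Longrightarrow> sum f A \<in> I"
  by (induction A rule: infinite_finite_induct) (auto simp: ideal_0 ideal_add)
lemma ideal_1: "is_ideal I \<Longrightarrow> 1 \<in> I \<Longrightarrow> I = UNIV"
  using ideal_multR[of I 1] by auto

definition deriv_like :: "('a::comm_ring_1 \<Rightarrow> 'a) \<Rightarrow> bool" where
  "deriv_like D \<longleftrightarrow> (\<forall>a b. D (a+b) = D a + D b) \<and> (\<forall>a b. D (a*b) = a * D b + b * D a)"

lemma deriv_like_0: "deriv_like D \<Longrightarrow> D 0 = 0"
  unfolding deriv_like_def by (metis add.right_neutral add_left_cancel)

lemma deriv_poly:
  fixes D :: "'a::idom \<Rightarrow> 'a"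
  assumes "deriv_like D"
  shows "D (poly p t) = poly (map_poly D p) t + poly (pderiv p) t * D t"
proof (induction p)
  case 0 then show ?case using deriv_like_0[OF assms] by simp
next
  case (pCons a p)
  have "D (poly (pCons a p) t) = D a + (t * D (poly p t) + poly p t * D t)"
    using assms by (simp add: deriv_like_def)
  also have "\<dots> = poly (map_poly D (pCons a p)) t + poly (pderiv (pCons a p)) t * D t"
    using pCons by (simp add: map_poly_pCons deriv_like_0[OF assms] pderiv_pCons algebra_simps)
  finally show ?case .
qed

definition evp :: "(complex \<Rightarrow> 'a::comm_ring_1) \<Rightarrow> 'a \<Rightarrow> complex poly \<Rightarrow> 'a" where
  "evp \<iota> t q = poly (map_poly \<iota> q) t"

lemma map_poly_add_hom: "(\<And>a b. f (a + b) = f a + f b) \<Longrightarrow> f 0 = 0 \<Longrightarrow> map_poly f (p + q) = map_poly f p + map_poly f q"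
  by (intro poly_eqI) (simp add: coeff_map_poly)

context
  fixes \<iota> :: "complex \<Rightarrow> 'a::idom"
  assumes cam: "cplx_alg_map \<iota>"
begin

lemma evp_0[simp]: "evp \<iota> t 0 = 0" by (simp add: evp_def)

lemma evp_add: "evp \<iota> t (p + q) = evp \<iota> t p + evp \<iota> t q"
  unfolding evp_def using map_poly_add_hom[of \<iota> p q] cam_add[OF cam] cam_0[OF cam] by simp

lemma evp_pCons: "evp \<iota> t (pCons a p) = \<iota> a + t * evp \<iota> t p"
  unfolding evp_def by (simp add: map_poly_pCons cam_0[OF cam])

lemma evp_const[simp]: "evp \<iota> t [:a:] = \<iota> a"
  by (simp add: evp_pCons)

lemma evp_smult: "evp \<iota> t (smult a p) = \<iota> a * evp \<iota> t p"
  unfolding evp_def by (simp add: map_poly_smult cam_0[OF cam] cam_mult[OF cam])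

lemma evp_mult: "evp \<iota> t (p * q) = evp \<iota> t p * evp \<iota> t q"
proof (induction p)
  case 0 then show ?case by (simp add: evp_def)
next
  case (pCons a p)
  have "evp \<iota> t (pCons 0 (p*q)) = t * evp \<iota> t (p * q)"
    by (simp add: evp_pCons cam_0[OF cam])
  then show ?case using pCons by (simp add: evp_add evp_smult evp_pCons algebra_simps)
qed

lemma evp_1[simp]: "evp \<iota> t 1 = 1"
  using evp_const[of t 1] cam_1[OF cam] by (simp add: one_pCons)

lemma evp_X: "evp \<iota> t [:- c, 1:] = t - \<iota> c"
  by (simp add: evp_pCons cam_uminus[OF cam] cam_1[OF cam])

lemma evp_prod: "evp \<iota> t (\<Prod>i\<in>A. f i) = (\<Prod>i\<in>A. evp \<iota> t (f i))"
  by (induction A rule: infinite_finite_induct) (auto simp: evp_mult)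

lemma evp_sum: "evp \<iota> t (\<Sum>i\<in>A. f i) = (\<Sum>i\<in>A. evp \<iota> t (f i))"
  by (induction A rule: infinite_finite_induct) (auto simp: evp_add)

lemma pderiv_map_cam: "pderiv (map_poly \<iota> q) = map_poly \<iota> (pderiv q)"
  by (intro poly_eqI) (simp add: coeff_pderiv coeff_map_poly cam_0[OF cam] cam_mult[OF cam] cam_of_nat[OF cam] del: of_nat_Suc)

lemma deriv_evp:
  assumes "deriv_like D" "\<And>c. D (\<iota> c) = 0"
  shows "D (evp \<iota> t q) = evp \<iota> t (pderiv q) * D t"
proof -
  have "map_poly D (map_poly \<iota> q) = 0"
    by (intro poly_eqI) (simp add: coeff_map_poly assms(2) cam_0[OF cam] deriv_like_0[OF assms(1)])
  then show ?thesis unfolding evp_def using deriv_poly[OF assms(1), of "map_poly \<iota> q" t]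
    by (simp add: pderiv_map_cam)
qed

end



lemma cam_vs: "cplx_alg_map \<iota> \<Longrightarrow> vector_space (\<lambda>c x. \<iota> c * (x::'a::idom))"
  by unfold_locales (simp_all add: cam_add cam_mult cam_1 algebra_simps)

lemma count_dep:
  fixes \<iota> :: "complex \<Rightarrow> 'a::idom" and f :: "complex \<Rightarrow> 'a"
  assumes cam: "cplx_alg_map \<iota>" and fin: "finite S" and gen: "alg_gen \<iota> S = UNIV"
  shows "\<exists>L a. finite L \<and> (\<Sum>l\<in>L. \<iota> (a l) * f l) = 0 \<and> (\<exists>l\<in>L. a l \<noteq> 0)"
proof -
  interpret V: vector_space "\<lambda>c x. \<iota> c * (x::'a)" by (rule cam_vs[OF cam])
  define M where "M = prod_list ` lists S"
  have cM: "countable M" unfolding M_def using fin by (intro countable_image countable_lists) (simp add: countable_finite)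
  have Mmult: "a * b \<in> M" if ha: "a \<in> M" and hb: "b \<in> M" for a b
  proof -
    obtain xs ys where "xs \<in> lists S" "ys \<in> lists S" "a = prod_list xs" "b = prod_list ys"
      using ha hb unfolding M_def by blast
    then show ?thesis unfolding M_def by (intro image_eqI[of _ _ "xs @ ys"]) auto
  qed
  have M1: "1 \<in> M" unfolding M_def by (intro image_eqI[of _ _ "[]"]) auto
  have sm1: "x * b \<in> V.span M" if "x \<in> M" "b \<in> V.span M" for x b
    using that(2)
  proof (induction rule: V.span_induct_alt)
    case base then show ?case by (simp add: V.span_zero)
  next
    case (step c z w)
    have "x * (\<iota> c * z + w) = \<iota> c * (x * z) + x * w" by (simp add: algebra_simps)
    moreover have "x * z \<in> V.span M" using Mmult[OF that(1) step(1)] V.span_superset by blast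
    ultimately show ?case using step(2) by (simp add: V.span_add V.span_scale)
  qed
  have smult: "a * b \<in> V.span M" if "a \<in> V.span M" "b \<in> V.span M" for a b
    using that(1)
  proof (induction rule: V.span_induct_alt)
    case base then show ?case by (simp add: V.span_zero)
  next
    case (step c x y)
    have "(\<iota> c * x + y) * b = \<iota> c * (x * b) + y * b" by (simp add: algebra_simps)
    then show ?case using step sm1[OF step(1) that(2)] by (simp add: V.span_add V.span_scale)
  qed
  have spanU: "V.span M = UNIV"
  proof -
    have "x \<in> V.span M" if "x \<in> alg_gen \<iota> S" for x
      using that
    proof induction
      case (scalar c)
      have "\<iota> c * 1 \<in> V.span M" using M1 V.span_superset V.span_scale by blast
      then show ?case by simp
    next
      case (gen s)
      have "prod_list [s] \<in> M" unfolding M_def using gen by (intro imageI) simp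
      then show ?case using V.span_superset by auto
    next
      case (add x y) then show ?case by (simp add: V.span_add)
    next
      case (mult x y) then show ?case by (simp add: smult)
    qed
    then show ?thesis using gen by auto
  qed
  have indep_count: "countable I" if "V.independent I" for I
  proof -
    have "I \<subseteq> (\<Union>F\<in>{F. finite F \<and> F \<subseteq> M}. I \<inter> V.span F)"
    proof
      fix v assume "v \<in> I"
      have "v \<in> V.span M" using spanU by auto
      then obtain t r where "finite t" "t \<subseteq> M" "v = (\<Sum>a\<in>t. \<iota> (r a) * a)"
        unfolding V.span_explicit by blast
      moreover have "(\<Sum>a\<in>t. \<iota> (r a) * a) \<in> V.span t"
        by (intro V.span_sum V.span_scale) (simp add: V.span_base)
      ultimately show "v \<in> (\<Union>F\<in>{F. finite F \<and> F \<subseteq> M}. I \<inter> V.span F)" using \<open>v \<in> I\<close> by blast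
    qed
    moreover have "countable (\<Union>F\<in>{F. finite F \<and> F \<subseteq> M}. I \<inter> V.span F)"
    proof (rule countable_UN)
      show "countable {F. finite F \<and> F \<subseteq> M}" by (rule countable_Collect_finite_subset[OF cM])
      fix F assume "F \<in> {F. finite F \<and> F \<subseteq> M}"
      then have "finite (I \<inter> V.span F)"
        using V.independent_span_bound[of F "I \<inter> V.span F"] V.independent_mono[OF that] by auto
      then show "countable (I \<inter> V.span F)" by (rule countable_finite)
    qed
    ultimately show ?thesis by (rule countable_subset)
  qed
  show ?thesis
  proof (cases "inj f")
    case False
    then obtain l1 l2 where "l1 \<noteq> l2" "f l1 = f l2" unfolding inj_def by blast
    define a :: "complex \<Rightarrow> complex" where "a = (\<lambda>z. if z = l1 then 1 else -1)"
    have "(\<Sum>l\<in>{l1,l2}. \<iota> (a l) * f l) = \<iota> 1 * f l1 + \<iota> (-1) * f l2"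
      using \<open>l1 \<noteq> l2\<close> unfolding a_def by simp
    also have "\<dots> = 0" using \<open>f l1 = f l2\<close> by (simp add: cam_uminus[OF cam] cam_1[OF cam])
    finally show ?thesis
      by (intro exI[of _ "{l1, l2}"] exI[of _ a]) (simp add: a_def)
  next
    case True
    have "\<not> countable (range f)"
      using countable_image_inj_on[of f UNIV] True uncountable_UNIV_complex by auto
    then have "V.dependent (range f)" using indep_count by blast
    then obtain t u where t: "finite t" "t \<subseteq> range f" "(\<Sum>v\<in>t. \<iota> (u v) * v) = 0" "\<exists>v\<in>t. u v \<noteq> 0"
      unfolding V.dependent_explicit by blast
    define L where "L = f -` t"
    have fL: "f ` L = t" unfolding L_def using t(2) by auto
    have "finite L" unfolding L_def using t(1) True by (simp add: finite_vimageI)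
    moreover have "(\<Sum>l\<in>L. \<iota> (u (f l)) * f l) = 0"
    proof -
      have "(\<Sum>v\<in>f ` L. \<iota> (u v) * v) = (\<Sum>l\<in>L. \<iota> (u (f l)) * f l)"
        by (rule sum.reindex_cong[of f, OF inj_on_subset[OF True]]) auto
      then show ?thesis using fL t(3) by simp
    qed
    moreover have "\<exists>l\<in>L. u (f l) \<noteq> 0" using t(4) fL by auto
    ultimately show ?thesis by (intro exI[of _ L] exI[of _ "\<lambda>l. u (f l)"]) simp
  qed
qed




lemma ideal_extend:
  fixes P :: "'a::comm_ring_1 set"
  assumes "is_ideal P"
  shows "is_ideal {p + a * r | p r. p \<in> P}" "P \<subseteq> {p + a * r | p r. p \<in> P}" "a \<in> {p + a * r | p r. p \<in> P}"
proof -
  show "is_ideal {p + a * r | p r. p \<in> P}"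
    unfolding is_ideal_def
  proof (intro conjI ballI allI)
    show "0 \<in> {p + a * r | p r. p \<in> P}" using ideal_0[OF assms] by (intro CollectI exI[of _ 0]) simp
  next
    fix x y assume "x \<in> {p + a * r | p r. p \<in> P}" "y \<in> {p + a * r | p r. p \<in> P}"
    then obtain p1 r1 p2 r2 where "x = p1 + a * r1" "y = p2 + a * r2" "p1 \<in> P" "p2 \<in> P" by blast
    then show "x + y \<in> {p + a * r | p r. p \<in> P}"
      by (intro CollectI exI[of _ "p1 + p2"] exI[of _ "r1 + r2"]) (simp add: ideal_add[OF assms] algebra_simps)
  next
    fix s x assume "x \<in> {p + a * r | p r. p \<in> P}"
    then obtain p1 r1 where "x = p1 + a * r1" "p1 \<in> P" by blast
    then show "s * x \<in> {p + a * r | p r. p \<in> P}"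
    proof -
      have "s * x = s * p1 + a * (s * r1)" using \<open>x = p1 + a * r1\<close> by (simp add: algebra_simps)
      moreover have "s * p1 \<in> P" using ideal_multL[OF assms \<open>p1 \<in> P\<close>] .
      ultimately show ?thesis by blast
    qed
  qed
  show "P \<subseteq> {p + a * r | p r. p \<in> P}"
  proof
    fix x assume "x \<in> P"
    moreover have "x = x + a * 0" by simp
    ultimately show "x \<in> {p + a * r | p r. p \<in> P}" by blast
  qed
  show "a \<in> {p + a * r | p r. p \<in> P}" using ideal_0[OF assms] by (intro CollectI exI[of _ 0] exI[of _ 1]) simp
qed

lemma exists_max_ideal:
  fixes I S :: "'a::comm_ring_1 set"
  assumes I: "is_ideal I" and IS: "I \<inter> S = {}" and S1: "1 \<in> S" and Sm: "\<And>a b. a \<in> S \<Longrightarrow> b \<in> S \<Longrightarrow> a * b \<in> S"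
  shows "\<exists>P. prime_ideal P \<and> I \<subseteq> P \<and> P \<inter> S = {} \<and> (\<forall>J. is_ideal J \<and> P \<subseteq> J \<and> J \<inter> S = {} \<longrightarrow> J = P)"
proof -
  define A where "A = {J. is_ideal J \<and> I \<subseteq> J \<and> J \<inter> S = {}}"
  have "\<exists>M\<in>A. \<forall>X\<in>A. M \<subseteq> X \<longrightarrow> X = M"
  proof (rule subset_Zorn_nonempty)
    show "A \<noteq> {}" using I IS unfolding A_def by blast
    fix C assume C: "C \<noteq> {}" "subset.chain A C"
    then have CA: "C \<subseteq> A" and ch: "\<And>X Y. X \<in> C \<Longrightarrow> Y \<in> C \<Longrightarrow> X \<subseteq> Y \<or> Y \<subseteq> X"
      unfolding subset.chain_def by auto
    have "is_ideal (\<Union>C)" unfolding is_ideal_def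
    proof (intro conjI ballI allI)
      obtain X where "X \<in> C" using C by blast
      then show "0 \<in> \<Union>C" using CA ideal_0 unfolding A_def by blast
    next
      fix x y assume "x \<in> \<Union>C" "y \<in> \<Union>C"
      then obtain X Y where XY: "X \<in> C" "Y \<in> C" "x \<in> X" "y \<in> Y" by blast
      then have "is_ideal X" "is_ideal Y" using CA unfolding A_def by auto
      then show "x + y \<in> \<Union>C" using ch[OF XY(1,2)] XY ideal_add by blast
    next
      fix r x assume "x \<in> \<Union>C"
      then obtain X where X: "X \<in> C" "x \<in> X" by blast
      then have "is_ideal X" using CA unfolding A_def by auto
      then show "r * x \<in> \<Union>C" using X ideal_multL by blast
    qed
    moreover have "I \<subseteq> \<Union>C" using C CA unfolding A_def by blast
    moreover have "\<Union>C \<inter> S = {}" using CA unfolding A_def by blast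
    ultimately show "\<Union>C \<in> A" unfolding A_def by blast
  qed
  then obtain P where PA: "P \<in> A" and Pmax: "\<And>X. X \<in> A \<Longrightarrow> P \<subseteq> X \<Longrightarrow> X = P" by blast
  have Pi: "is_ideal P" and IP: "I \<subseteq> P" and PS: "P \<inter> S = {}" using PA unfolding A_def by auto
  have ext: "\<exists>p r. p \<in> P \<and> p + a * r \<in> S" if "a \<notin> P" for a
  proof (rule ccontr)
    assume "\<not> ?thesis"
    then have "{p + a * r | p r. p \<in> P} \<in> A" using ideal_extend[OF Pi, of a] IP unfolding A_def by blast
    then have "{p + a * r | p r. p \<in> P} = P" using Pmax ideal_extend(2)[OF Pi] by blast
    then show False using ideal_extend(3)[OF Pi, of a] that by simp
  qed
  have "prime_ideal P" unfolding prime_ideal_def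
  proof (intro conjI allI impI)
    show "is_ideal P" by fact
    show "P \<noteq> UNIV" using PS S1 by blast
    fix a b assume ab: "a * b \<in> P"
    show "a \<in> P \<or> b \<in> P"
    proof (rule ccontr)
      assume "\<not> (a \<in> P \<or> b \<in> P)"
      then obtain p1 r1 p2 r2 where h: "p1 \<in> P" "p1 + a * r1 \<in> S" "p2 \<in> P" "p2 + b * r2 \<in> S"
        using ext by meson
      have "(p1 + a * r1) * (p2 + b * r2) = p1 * (p2 + b * r2) + p2 * (a * r1) + (a * b) * (r1 * r2)"
        by (simp add: algebra_simps)
      also have "\<dots> \<in> P" by (rule ideal_add[OF Pi ideal_add[OF Pi ideal_multR[OF Pi h(1)] ideal_multR[OF Pi h(3)]] ideal_multR[OF Pi ab]])
      finally show False using Sm[OF h(2) h(4)] PS by blast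
    qed
  qed
  then show ?thesis using IP PS Pmax unfolding A_def by blast
qed




lemma prime_not_unit:
  assumes "cplx_alg_map \<iota>" "prime_ideal Q" "c \<noteq> 0"
  shows "\<iota> c \<notin> Q"
proof
  assume "\<iota> c \<in> Q"
  then have "\<iota> c * \<iota> (inverse c) \<in> Q" using assms(2) unfolding prime_ideal_def by (simp add: ideal_multR)
  then have "1 \<in> Q" using cam_inv[OF assms(1,3)] by simp
  then show False using assms(2) ideal_1 unfolding prime_ideal_def by blast
qed

lemma poly_root_in_prime:
  fixes \<iota> :: "complex \<Rightarrow> 'a::idom"
  assumes cam: "cplx_alg_map \<iota>" and Q: "prime_ideal Q"
  shows "p \<noteq> 0 \<Longrightarrow> evp \<iota> t p \<in> Q \<Longrightarrow> \<exists>r. t - \<iota> r \<in> Q"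
proof (induction "degree p" arbitrary: p rule: less_induct)
  case less
  show ?case
  proof (cases "degree p = 0")
    case True
    then have "p = [:coeff p 0:]" using degree_0_id by metis
    then have "\<iota> (coeff p 0) \<in> Q" "coeff p 0 \<noteq> 0" using less.prems by (metis evp_const[OF cam], metis pCons_0_0)
    then show ?thesis using prime_not_unit[OF cam Q] by blast
  next
    case False
    then have "\<not> constant (poly p)" by (simp add: constant_degree)
    then obtain z where "poly p z = 0" using fundamental_theorem_of_algebra by blast
    then obtain q where pq: "p = [:-z, 1:] * q" using poly_eq_0_iff_dvd by blast
    have q0: "q \<noteq> 0" using less.prems pq by auto
    have "degree p = degree [:-z, 1:] + degree q" unfolding pq by (rule degree_mult_eq) (simp_all add: q0)
    then have dq: "degree q < degree p" by simp
    have "evp \<iota> t p = (t - \<iota> z) * evp \<iota> t q" unfolding pq evp_mult[OF cam] evp_X[OF cam] ..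
    then have "(t - \<iota> z) * evp \<iota> t q \<in> Q" using less.prems by simp
    then have "t - \<iota> z \<in> Q \<or> evp \<iota> t q \<in> Q" using Q unfolding prime_ideal_def by blast
    then show ?thesis using less.hyps[OF dq q0] by blast
  qed
qed

lemma lagrange_nonzero:
  fixes L :: "complex set" and c :: "complex \<Rightarrow> complex"
  assumes "finite L" "k \<in> L" "c k \<noteq> 0"
  shows "(\<Sum>l\<in>L. smult (c l) (\<Prod>m\<in>L-{l}. [:-m, 1:])) \<noteq> 0"
proof
  assume h: "(\<Sum>l\<in>L. smult (c l) (\<Prod>m\<in>L-{l}. [:-m, 1:])) = 0"
  have "poly (\<Sum>l\<in>L. smult (c l) (\<Prod>m\<in>L-{l}. [:-m, 1:])) k = (\<Sum>l\<in>L. c l * (\<Prod>m\<in>L-{l}. k - m))"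
    by (simp add: poly_sum poly_prod)
  also have "\<dots> = c k * (\<Prod>m\<in>L-{k}. k - m) + (\<Sum>l\<in>L-{k}. c l * (\<Prod>m\<in>L-{l}. k - m))"
    using assms by (simp add: sum.remove)
  also have "(\<Sum>l\<in>L-{k}. c l * (\<Prod>m\<in>L-{l}. k - m)) = 0"
    using assms by (intro sum.neutral ballI) (auto simp: prod_zero_iff)
  finally have "c k * (\<Prod>m\<in>L-{k}. k - m) = 0" using h by simp
  then show False using assms by (simp add: prod_zero_iff)
qed

lemma prod_remove_mult:
  fixes g :: "'b \<Rightarrow> 'a::comm_ring_1"
  assumes "finite L" "l \<in> L"
  shows "(\<Prod>m\<in>L-{l}. g m) * g l = (\<Prod>m\<in>L. g m)"
  using prod.remove[OF assms, of g] by (simp add: mult.commute)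

lemma zariski:
  fixes \<iota> :: "complex \<Rightarrow> 'a::idom"
  assumes cam: "cplx_alg_map \<iota>" and fin: "finite S" and gen: "alg_gen \<iota> S = UNIV"
    and M: "prime_ideal M" and maxM: "\<forall>J. is_ideal J \<and> M \<subseteq> J \<and> J \<inter> {1} = {} \<longrightarrow> J = M"
  shows "\<exists>r. a - \<iota> r \<in> M"
proof (rule ccontr)
  assume na: "\<not> ?thesis"
  have Mi: "is_ideal M" using M unfolding prime_ideal_def by blast
  have "\<exists>r. 1 - (a - \<iota> l) * r \<in> M" for l
  proof -
    let ?J = "{p + (a - \<iota> l) * r | p r. p \<in> M}"
    have "?J \<noteq> M" using ideal_extend(3)[OF Mi, of "a - \<iota> l"] na by blast
    then have "?J \<inter> {1} \<noteq> {}" using maxM ideal_extend(1,2)[OF Mi, of "a - \<iota> l"] by blast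
    then obtain p r where "p \<in> M" "p + (a - \<iota> l) * r = 1" by blast
    then have "1 - (a - \<iota> l) * r \<in> M" by (metis add_diff_cancel_right')
    then show ?thesis by blast
  qed
  then obtain u where u: "\<And>l. 1 - (a - \<iota> l) * u l \<in> M" by metis
  obtain L c where L: "finite L" "(\<Sum>l\<in>L. \<iota> (c l) * u l) = 0" "\<exists>l\<in>L. c l \<noteq> 0"
    using count_dep[OF cam fin gen, of u] by blast
  define p where "p = (\<Sum>l\<in>L. smult (c l) (\<Prod>m\<in>L-{l}. [:-m, 1:]))"
  have p0: "p \<noteq> 0" unfolding p_def using lagrange_nonzero L by blast
  define P where "P = (\<lambda>l. \<Prod>m\<in>L-{l}. a - \<iota> m)"
  have "evp \<iota> a p = (\<Sum>l\<in>L. \<iota> (c l) * P l)"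
    unfolding p_def P_def by (simp add: evp_sum[OF cam] evp_smult[OF cam] evp_prod[OF cam] evp_X[OF cam])
  also have "\<dots> = (\<Sum>l\<in>L. \<iota> (c l) * P l * (1 - (a - \<iota> l) * u l)) + (\<Prod>m\<in>L. a - \<iota> m) * (\<Sum>l\<in>L. \<iota> (c l) * u l)"
  proof -
    have "\<iota> (c l) * P l * (1 - (a - \<iota> l) * u l) = \<iota> (c l) * P l - (\<Prod>m\<in>L. a - \<iota> m) * (\<iota> (c l) * u l)"
      if "l \<in> L" for l
    proof -
      have eq: "(\<Prod>m\<in>L. a - \<iota> m) = P l * (a - \<iota> l)"
        using prod_remove_mult[OF L(1) that, of "\<lambda>m. a - \<iota> m"] unfolding P_def by simp
      show ?thesis unfolding eq by (simp add: algebra_simps)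
    qed
    then show ?thesis by (simp add: sum_subtractf sum_distrib_left)
  qed
  also have "\<dots> \<in> M" using L(2) u Mi
    by (simp add: ideal_sum ideal_multL)
  finally obtain r where "a - \<iota> r \<in> M" using poly_root_in_prime[OF cam M p0] by blast
  then show False using na by blast
qed




lemma hom_poly_add: "(\<And>a b. h (a + b) = h a + h b) \<Longrightarrow> h 0 = 0 \<Longrightarrow>
   poly (map_poly h (p + q)) t = poly (map_poly h p) t + poly (map_poly h q) t"
  using map_poly_add_hom[of h p q] by simp

lemma hom_poly_mult:
  fixes h :: "'b::comm_ring_1 \<Rightarrow> 'a::comm_ring_1"
  assumes ha: "\<And>a b. h (a + b) = h a + h b" and hm: "\<And>a b. h (a * b) = h a * h b" and h0: "h 0 = 0"
  shows "poly (map_poly h (p * q)) t = poly (map_poly h p) t * poly (map_poly h q) t"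
proof (induction p)
  case 0 then show ?case by simp
next
  case (pCons a p)
  have "map_poly h (smult a q) = smult (h a) (map_poly h q)" by (rule map_poly_smult[OF h0 hm])
  then show ?case using pCons by (simp add: hom_poly_add[OF ha h0] map_poly_pCons[of h, OF h0] h0 algebra_simps)
qed

definition ev2 :: "(complex \<Rightarrow> 'a::idom) \<Rightarrow> 'a \<Rightarrow> 'a \<Rightarrow> complex poly poly \<Rightarrow> 'a" where
  "ev2 \<iota> x y F = poly (map_poly (evp \<iota> y) F) x"

context
  fixes \<iota> :: "complex \<Rightarrow> 'a::idom" and x y :: 'a
  assumes cam: "cplx_alg_map \<iota>"
begin

lemmas evp_simps[simp] = evp_0[OF cam] evp_const[OF cam] evp_1[OF cam]

lemma ev2_add: "ev2 \<iota> x y (F + G) = ev2 \<iota> x y F + ev2 \<iota> x y G"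
  unfolding ev2_def by (rule hom_poly_add) (simp_all add: evp_add[OF cam])

lemma ev2_mult: "ev2 \<iota> x y (F * G) = ev2 \<iota> x y F * ev2 \<iota> x y G"
  unfolding ev2_def by (rule hom_poly_mult) (simp_all add: evp_add[OF cam] evp_mult[OF cam])

lemma ev2_0[simp]: "ev2 \<iota> x y 0 = 0" unfolding ev2_def by simp

lemma ev2_const[simp]: "ev2 \<iota> x y [:q:] = evp \<iota> y q"
  unfolding ev2_def by (simp add: map_poly_pCons)

lemma ev2_X: "ev2 \<iota> x y [:[:- m:], 1:] = x - \<iota> m"
  unfolding ev2_def by (simp add: map_poly_pCons evp_pCons[OF cam] cam_uminus[OF cam] cam_0[OF cam])

lemma ev2_sum: "ev2 \<iota> x y (\<Sum>i\<in>A. f i) = (\<Sum>i\<in>A. ev2 \<iota> x y (f i))"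
  by (induction A rule: infinite_finite_induct) (auto simp: ev2_add)

lemma ev2_prod: "ev2 \<iota> x y (\<Prod>i\<in>A. f i) = (\<Prod>i\<in>A. ev2 \<iota> x y (f i))"
proof (induction A rule: infinite_finite_induct)
  case (infinite A) then show ?case using ev2_const[of 1] evp_1[OF cam] by (simp add: pCons_one[symmetric])
next
  case empty then show ?case using ev2_const[of 1] evp_1[OF cam] by (simp add: pCons_one[symmetric])
next
  case (insert a A) then show ?case by (simp add: ev2_mult)
qed

lemma evp_of_nat: "evp \<iota> y (of_nat n) = of_nat n"
  by (induction n) (simp_all add: evp_add[OF cam])

lemma pderiv_map_evp: "pderiv (map_poly (evp \<iota> y) F) = map_poly (evp \<iota> y) (pderiv F)"
  by (intro poly_eqI) (simp add: coeff_pderiv coeff_map_poly evp_mult[OF cam] evp_of_nat del: of_nat_Suc)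

lemma deriv_ev2:
  assumes "deriv_like D" "\<And>q. D (evp \<iota> y q) = 0"
  shows "D (ev2 \<iota> x y F) = ev2 \<iota> x y (pderiv F) * D x"
proof -
  have "map_poly D (map_poly (evp \<iota> y) F) = 0"
    by (intro poly_eqI) (simp add: coeff_map_poly assms(2) deriv_like_0[OF assms(1)])
  then show ?thesis unfolding ev2_def using deriv_poly[OF assms(1), of "map_poly (evp \<iota> y) F" x]
    by (simp add: pderiv_map_evp)
qed

end

lemma pb_props:
  fixes \<iota> :: "complex \<Rightarrow> 'a::comm_ring_1" and br :: "'a \<Rightarrow> 'a \<Rightarrow> 'a"
  assumes "poisson_bracket \<iota> br"
  shows "br (a + b) c = br a c + br b c" "br a (b + c) = br a b + br a c"
    "br (\<iota> k * a) b = \<iota> k * br a b" "br a b = - br b a" "br (a * b) c = a * br b c + b * br a c"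
    "br a a = 0"
proof -
  have h: "(\<forall>x y z. br (x + y) z = br x z + br y z) \<and>
     (\<forall>x y z. br x (y + z) = br x y + br x z) \<and>
     (\<forall>c x y. br (\<iota> c * x) y = \<iota> c * br x y) \<and>
     (\<forall>c x y. br x (\<iota> c * y) = \<iota> c * br x y) \<and>
     (\<forall>x. br x x = 0) \<and>
     (\<forall>x y. br x y = - br y x) \<and>
     (\<forall>x y z. br x (br y z) + br y (br z x) + br z (br x y) = 0) \<and>
     (\<forall>x y z. br (x * y) z = x * br y z + y * br x z)" using assms unfolding poisson_bracket_def by blast
  show "br (a + b) c = br a c + br b c" by (rule h[THEN conjunct1, rule_format])
  show "br a (b + c) = br a b + br a c" by (rule h[THEN conjunct2, THEN conjunct1, rule_format])
  show "br (\<iota> k * a) b = \<iota> k * br a b" by (rule h[THEN conjunct2, THEN conjunct2, THEN conjunct1, rule_format])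
  show "br a b = - br b a" by (rule h[THEN conjunct2, THEN conjunct2, THEN conjunct2, THEN conjunct2, THEN conjunct2, THEN conjunct1, rule_format])
  show "br (a * b) c = a * br b c + b * br a c" by (rule h[THEN conjunct2, THEN conjunct2, THEN conjunct2, THEN conjunct2, THEN conjunct2, THEN conjunct2, THEN conjunct2, rule_format])
  show "br a a = 0" by (rule h[THEN conjunct2, THEN conjunct2, THEN conjunct2, THEN conjunct2, THEN conjunct1, rule_format])
qed

context
  fixes \<iota> :: "complex \<Rightarrow> 'a::idom" and br :: "'a \<Rightarrow> 'a \<Rightarrow> 'a" and P0 :: "'a set" and x y :: 'a
  assumes cam: "cplx_alg_map \<iota>" and pb: "poisson_bracket \<iota> br" and PP: "poisson_prime br P0"
    and wP: "br x y \<notin> P0"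
begin

lemma br_1: "br 1 z = 0"
proof -
  have "br 1 z = br 1 z + br 1 z" using pb_props(5)[OF pb, of 1 1 z] by simp
  then show ?thesis by (metis add_cancel_right_right)
qed

lemma br_cL: "br (\<iota> c) z = 0"
  using pb_props(3)[OF pb, of c 1 z] br_1 by simp

lemma br_cR: "br z (\<iota> c) = 0"
  using pb_props(4)[OF pb, of z "\<iota> c"] br_cL by simp

lemma derL: "deriv_like (\<lambda>a. br a z)"
  unfolding deriv_like_def using pb_props(1,5)[OF pb] by blast

lemma derR: "deriv_like (\<lambda>a. br z a)"
  unfolding deriv_like_def
proof (intro conjI allI)
  show "br z (a + b) = br z a + br z b" for a b by (rule pb_props(2)[OF pb])
  show "br z (a * b) = a * br z b + b * br z a" for a b
    using pb_props(5)[OF pb, of a b z] pb_props(4)[OF pb, of z "a*b"] pb_props(4)[OF pb, of z a]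
      pb_props(4)[OF pb, of z b] by (simp add: algebra_simps)
qed

lemma P0i: "is_ideal P0" and P0p: "prime_ideal P0"
  using PP unfolding poisson_prime_def prime_ideal_def by blast+

lemma P0L: "a \<in> P0 \<Longrightarrow> br a b \<in> P0"
  using PP unfolding poisson_prime_def by blast

lemma P0R: "a \<in> P0 \<Longrightarrow> br b a \<in> P0"
  using P0L[of a b] pb_props(4)[OF pb, of b a] ideal_neg[OF P0i] by simp

lemma P0_cancel: "a * br x y \<in> P0 \<Longrightarrow> a \<in> P0"
  using P0p wP unfolding prime_ideal_def by blast

lemma indep_y: "evp \<iota> y q \<in> P0 \<Longrightarrow> q = 0"
proof (induction "degree q" arbitrary: q rule: less_induct)
  case less
  show ?case
  proof (cases "degree q = 0")
    case True
    then have "q = [:coeff q 0:]" using degree_0_id by metis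
    then have "\<iota> (coeff q 0) \<in> P0" using less.prems by (metis evp_const[OF cam])
    then have "coeff q 0 = 0" using prime_not_unit[OF cam P0p] by blast
    then show ?thesis using \<open>q = [:coeff q 0:]\<close> by simp
  next
    case False
    have "br x (evp \<iota> y q) = evp \<iota> y (pderiv q) * br x y"
      by (rule deriv_evp[OF cam derR br_cR])
    then have "evp \<iota> y (pderiv q) \<in> P0" using P0R[OF less.prems, of x] P0_cancel by simp
    moreover have "degree (pderiv q) < degree q" using False by (simp add: degree_pderiv)
    ultimately have "pderiv q = 0" using less.hyps by blast
    then show ?thesis using False by (simp add: pderiv_eq_0_iff)
  qed
qed

lemma indep2: "ev2 \<iota> x y F \<in> P0 \<Longrightarrow> F = 0"
proof (induction "degree F" arbitrary: F rule: less_induct)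
  case less
  show ?case
  proof (cases "degree F = 0")
    case True
    then have "F = [:coeff F 0:]" using degree_0_id by metis
    then have "evp \<iota> y (coeff F 0) \<in> P0" using less.prems by (metis ev2_const[OF cam])
    then have "coeff F 0 = 0" using indep_y by blast
    then show ?thesis using \<open>F = [:coeff F 0:]\<close> by simp
  next
    case False
    have "br (ev2 \<iota> x y F) y = ev2 \<iota> x y (pderiv F) * br x y"
    proof (rule deriv_ev2[OF cam derL])
      show "br (evp \<iota> y q) y = 0" for q
        using deriv_evp[OF cam derL br_cL, of y q] pb_props(6)[OF pb, of y] by simp
    qed
    then have "ev2 \<iota> x y (pderiv F) \<in> P0" using P0L[OF less.prems, of y] P0_cancel by simp
    moreover have "degree (pderiv F) < degree F" using False by (simp add: degree_pderiv)
    ultimately have "pderiv F = 0" using less.hyps by blast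
    then show ?thesis using False by (simp add: pderiv_eq_0_iff)
  qed
qed

end



lemma lagrange_nonzero_gen:
  fixes L :: "'c set" and e :: "'c \<Rightarrow> 'b::idom" and c :: "'c \<Rightarrow> 'b"
  assumes "finite L" "k \<in> L" "c k \<noteq> 0" "inj_on e L"
  shows "(\<Sum>l\<in>L. [:c l:] * (\<Prod>m\<in>L-{l}. [:-e m, 1:])) \<noteq> 0"
proof
  assume h: "(\<Sum>l\<in>L. [:c l:] * (\<Prod>m\<in>L-{l}. [:-e m, 1:])) = 0"
  have "poly (\<Sum>l\<in>L. [:c l:] * (\<Prod>m\<in>L-{l}. [:-e m, 1:])) (e k) = (\<Sum>l\<in>L. c l * (\<Prod>m\<in>L-{l}. e k - e m))"
    by (simp add: poly_sum poly_prod)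
  also have "\<dots> = c k * (\<Prod>m\<in>L-{k}. e k - e m) + (\<Sum>l\<in>L-{k}. c l * (\<Prod>m\<in>L-{l}. e k - e m))"
    using assms by (simp add: sum.remove)
  also have "(\<Sum>l\<in>L-{k}. c l * (\<Prod>m\<in>L-{l}. e k - e m)) = 0"
    using assms by (intro sum.neutral ballI) (auto simp: prod_zero_iff)
  finally have "c k * (\<Prod>m\<in>L-{k}. e k - e m) = 0" using h by simp
  then show False using assms by (auto simp: prod_zero_iff inj_on_def)
qed

context
  fixes \<iota> :: "complex \<Rightarrow> 'a::idom" and br :: "'a \<Rightarrow> 'a \<Rightarrow> 'a" and P0 :: "'a set" and x y :: 'a and S :: "'a set"
  assumes cam: "cplx_alg_map \<iota>" and pb: "poisson_bracket \<iota> br" and PP: "poisson_prime br P0"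
    and wP: "br x y \<notin> P0" and fin: "finite S" and gen: "alg_gen \<iota> S = UNIV"
begin

lemma exists_c: "\<exists>c. \<forall>p b g. p \<in> P0 \<longrightarrow> g \<noteq> 0 \<longrightarrow> p + (x - \<iota> c) * b \<noteq> evp \<iota> y g"
proof (rule ccontr)
  assume "\<not> ?thesis"
  then have "\<forall>c. \<exists>b g. g \<noteq> 0 \<and> (x - \<iota> c) * b - evp \<iota> y g \<in> P0"
    by (metis add_diff_cancel_right' diff_add_cancel minus_diff_eq ideal_neg[OF P0i[OF cam pb PP wP]])
  then obtain bb gg where bg: "\<And>c. gg c \<noteq> 0" "\<And>c. (x - \<iota> c) * bb c - evp \<iota> y (gg c) \<in> P0" by metis
  obtain L a where L: "finite L" "(\<Sum>l\<in>L. \<iota> (a l) * bb l) = 0" "\<exists>l\<in>L. a l \<noteq> 0"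
    using count_dep[OF cam fin gen, of bb] by blast
  then obtain k where k: "k \<in> L" "a k \<noteq> 0" by blast
  define F where "F = (\<Sum>l\<in>L. [:[:a l:] * gg l:] * (\<Prod>m\<in>L-{l}. [:[:-m:], 1:]))"
  have "F \<noteq> 0" unfolding F_def
    using lagrange_nonzero_gen[OF L(1) k(1), of "\<lambda>l. [:a l:] * gg l" "\<lambda>m. [:m:]"] k bg(1)[of k]
    by (simp add: inj_on_def)
  moreover have "ev2 \<iota> x y F \<in> P0"
  proof -
    define Pr where "Pr = (\<lambda>l. \<Prod>m\<in>L-{l}. x - \<iota> m)"
    have "ev2 \<iota> x y F = (\<Sum>l\<in>L. \<iota> (a l) * evp \<iota> y (gg l) * Pr l)"
      unfolding F_def Pr_def ev2_sum[OF cam]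
    proof (rule sum.cong[OF refl])
      fix l
      show "ev2 \<iota> x y ([:[:a l:] * gg l:] * (\<Prod>m\<in>L-{l}. [:[:-m:], 1:])) = \<iota> (a l) * evp \<iota> y (gg l) * (\<Prod>m\<in>L-{l}. x - \<iota> m)"
        by (simp only: ev2_mult[OF cam] ev2_const[OF cam] ev2_prod[OF cam] ev2_X[OF cam] evp_mult[OF cam] evp_const[OF cam])
    qed
    also have "\<dots> = (\<Sum>l\<in>L. - (\<iota> (a l) * Pr l * ((x - \<iota> l) * bb l - evp \<iota> y (gg l)))) + (\<Prod>m\<in>L. x - \<iota> m) * (\<Sum>l\<in>L. \<iota> (a l) * bb l)"
    proof -
      have "- (\<iota> (a l) * Pr l * ((x - \<iota> l) * bb l - evp \<iota> y (gg l))) = \<iota> (a l) * evp \<iota> y (gg l) * Pr l - (\<Prod>m\<in>L. x - \<iota> m) * (\<iota> (a l) * bb l)"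
        if "l \<in> L" for l
      proof -
        have eq: "(\<Prod>m\<in>L. x - \<iota> m) = Pr l * (x - \<iota> l)"
          using prod_remove_mult[OF L(1) that, of "\<lambda>m. x - \<iota> m"] unfolding Pr_def by simp
        show ?thesis unfolding eq by (simp add: algebra_simps)
      qed
      then show ?thesis by (simp add: sum_subtractf sum_distrib_left)
    qed
    also have "\<dots> \<in> P0" using L(2) bg(2) P0i[OF cam pb PP wP]
      by (simp add: ideal_sum ideal_multL ideal_neg)
    finally show ?thesis .
  qed
  ultimately show False using indep2[OF cam pb PP wP] by blast
qed

end

lemma chain_contra:
  fixes P0 P1 M :: "'a::comm_ring_1 set"
  assumes kd: "krull_dim TYPE('a) = enat d" and P0: "prime_ideal P0" and hP: "enat d \<le> height P0 + 1"
    and P1: "prime_ideal P1" and M: "prime_ideal M" and s1: "P0 \<subset> P1" and s2: "P1 \<subset> M"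
  shows False
proof -
  have "\<exists>n f. prime_chain f n \<and> f n = P0 \<and> d \<le> n + 1"
  proof (rule ccontr)
    assume na: "\<not> ?thesis"
    have ch0: "prime_chain (\<lambda>_. P0) 0" unfolding prime_chain_def using P0 by simp
    then have "\<not> d \<le> 1" using na by fastforce
    then have "height P0 \<le> enat (d - 2)" unfolding height_def
      using na by (intro Sup_least) force
    then have "height P0 + 1 \<le> enat (d - 2) + 1" by (simp add: add_right_mono)
    then have "enat d \<le> enat (d - 2) + 1" using hP by order
    then show False using \<open>\<not> d \<le> 1\<close> by (simp add: one_enat_def)
  qed
  then obtain n f where f: "prime_chain f n" "f n = P0" "d \<le> n + 1" by blast
  define g where "g = (\<lambda>i. if i \<le> n then f i else if i = n + 1 then P1 else M)"
  have "prime_chain g (n + 2)" unfolding prime_chain_def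
  proof (intro conjI allI impI)
    fix i assume "i \<le> n + 2"
    then show "prime_ideal (g i)" using f(1) P1 M unfolding g_def prime_chain_def by auto
  next
    fix i assume i: "i < n + 2"
    show "g i \<subset> g (Suc i)"
    proof (cases "i < n")
      case True then show ?thesis using f(1) unfolding g_def prime_chain_def by auto
    next
      case False
      then have "i = n \<or> i = n + 1" using i by auto
      then show ?thesis using s1 s2 f(2) unfolding g_def by auto
    qed
  qed
  then have "enat (n + 2) \<le> krull_dim TYPE('a)" unfolding krull_dim_def by (intro Sup_upper) blast
  then show False using kd f(3) by simp
qed




lemma main_step:
  fixes \<iota> :: "complex \<Rightarrow> 'a::idom" and br :: "'a \<Rightarrow> 'a \<Rightarrow> 'a" and d :: nat
  assumes cam: "cplx_alg_map \<iota>" and fin: "finite S" and gen: "alg_gen \<iota> S = UNIV"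
    and pb: "poisson_bracket \<iota> br" and kd: "krull_dim TYPE('a) = enat d"
    and PP: "poisson_prime br P0" and hP: "enat d \<le> height P0 + 1"
  shows "br x y \<in> P0"
proof (rule ccontr)
  assume wP: "br x y \<notin> P0"
  have P0i: "is_ideal P0" and P0p: "prime_ideal P0" using P0i[OF cam pb PP wP] P0p[OF cam pb PP wP] .
  obtain c where c: "\<And>p b g. p \<in> P0 \<Longrightarrow> g \<noteq> 0 \<Longrightarrow> p + (x - \<iota> c) * b \<noteq> evp \<iota> y g"
    using exists_c[OF cam pb PP wP fin gen] by blast
  define I where "I = {p + (x - \<iota> c) * r | p r. p \<in> P0}"
  define T where "T = {evp \<iota> y g | g. g \<noteq> 0}"
  have "I \<inter> T = {}"
  proof (rule equals0I)
    fix z assume "z \<in> I \<inter> T"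
    then obtain p r g where "p \<in> P0" "z = p + (x - \<iota> c) * r" "g \<noteq> 0" "z = evp \<iota> y g"
      unfolding I_def T_def by blast
    then show False using c by metis
  qed
  moreover have "1 \<in> T" unfolding T_def using evp_1[OF cam, of y]
    by (intro CollectI exI[of _ 1]) simp
  moreover have "a * b \<in> T" if ha: "a \<in> T" and hb: "b \<in> T" for a b
  proof -
    obtain g h where "g \<noteq> 0" "h \<noteq> 0" "a = evp \<iota> y g" "b = evp \<iota> y h" using ha hb unfolding T_def by blast
    then have "g * h \<noteq> 0" "a * b = evp \<iota> y (g * h)" by (simp_all add: evp_mult[OF cam])
    then show ?thesis unfolding T_def by blast
  qed
  moreover have "is_ideal I" unfolding I_def by (rule ideal_extend(1)[OF P0i])
  ultimately have "\<exists>P. prime_ideal P \<and> I \<subseteq> P \<and> P \<inter> T = {} \<and> (\<forall>J. is_ideal J \<and> P \<subseteq> J \<and> J \<inter> T = {} \<longrightarrow> J = P)"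
    using exists_max_ideal[of I T] by blast
  then obtain P1 where P1: "prime_ideal P1" "I \<subseteq> P1" "P1 \<inter> T = {}" by blast
  have P1i: "is_ideal P1" using P1(1) unfolding prime_ideal_def by blast
  have "P0 \<subseteq> P1" using ideal_extend(2)[OF P0i, of "x - \<iota> c"] P1(2) unfolding I_def by blast
  moreover have "x - \<iota> c \<in> P1" using ideal_extend(3)[OF P0i, of "x - \<iota> c"] P1(2) unfolding I_def by blast
  moreover have "x - \<iota> c \<notin> P0"
  proof
    assume "x - \<iota> c \<in> P0"
    then have "ev2 \<iota> x y [:[:-c:], 1:] \<in> P0" by (simp add: ev2_X[OF cam])
    then have "[:[:-c:], 1:] = (0 :: complex poly poly)" by (rule indep2[OF cam pb PP wP])
    then show False by simp
  qed
  ultimately have s1: "P0 \<subset> P1" by blast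
  have "P1 \<inter> {1} = {}" using P1(3) \<open>1 \<in> T\<close> by blast
  moreover have "\<And>a b. a \<in> {1} \<Longrightarrow> b \<in> {1} \<Longrightarrow> a * b \<in> {1::'a}" by simp
  ultimately have "\<exists>M. prime_ideal M \<and> P1 \<subseteq> M \<and> M \<inter> {1} = {} \<and> (\<forall>J. is_ideal J \<and> M \<subseteq> J \<and> J \<inter> {1} = {} \<longrightarrow> J = M)"
    using exists_max_ideal[OF P1i, of "{1}"] by blast
  then obtain M where M: "prime_ideal M" "P1 \<subseteq> M" "M \<inter> {1} = {}"
    "\<forall>J. is_ideal J \<and> M \<subseteq> J \<and> J \<inter> {1} = {} \<longrightarrow> J = M" by blast
  obtain r where r: "y - \<iota> r \<in> M" using zariski[OF cam fin gen M(1) M(4)] by blast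
  have "y - \<iota> r \<in> T" unfolding T_def using evp_X[OF cam, of y r]
    by (intro CollectI exI[of _ "[:-r, 1:]"]) simp
  then have "y - \<iota> r \<notin> P1" using P1(3) by blast
  then have s2: "P1 \<subset> M" using M(2) r by blast
  show False using chain_contra[OF kd P0p hP P1(1) M(1) s1 s2] .
qed

theorem lemma7p2:
  fixes \<iota> :: "complex \<Rightarrow> 'a::idom" and br :: "'a \<Rightarrow> 'a \<Rightarrow> 'a" and d :: nat
  assumes "complex_affine \<iota>"
    and "poisson_bracket \<iota> br"
    and "krull_dim TYPE('a) = enat d"
    and "\<exists>x y. br x y \<noteq> 0"
  shows "\<Inter> {P. poisson_prime br P \<and> enat d \<le> height P + 1} \<noteq> {0}"
proof -
  obtain x y where xy: "br x y \<noteq> 0" using assms(4) by blast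
  have cam: "cplx_alg_map \<iota>" and "\<exists>S. finite S \<and> alg_gen \<iota> S = UNIV"
    using assms(1) unfolding complex_affine_def by blast+
  then obtain S where S: "finite S" "alg_gen \<iota> S = UNIV" by blast
  have "br x y \<in> \<Inter> {P. poisson_prime br P \<and> enat d \<le> height P + 1}"
  proof (rule InterI)
    fix P assume "P \<in> {P. poisson_prime br P \<and> enat d \<le> height P + 1}"
    then show "br x y \<in> P" using main_step[OF cam S assms(2,3), of P x y] by simp
  qed
  then show ?thesis using xy by blast
qed


end
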